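(* There exist uncountably many Liouville numbers $\xi$ such that \[ w_{=2}(\xi) = w_{=2}^{*}(\xi) = +\infty. \]
   Context: For a polynomial $P \in \mathbb{Z}[X]$, $H(P)$ denotes the maximum of the absolute values of its coefficients. For a real algebraic number $\alpha$, $H(\alpha) = H(P)$, where $P$ is the minimal polynomial of $\alpha$ over $\mathbb{Z}$. Let $\xi$ be a real number. $w_1(\xi)$ is the supremum of the real numbers $w$ such that, for arbitrarily large $H$, there is a polynomial $P \in \mathbb{Z}[X]$ of degree at most $1$ with $H(P) \leq H$ and $0 < |P(\xi)| \leq H^{-w}$. A real number $\xi$ is a Liouville number if $w_1(\xi) = +\infty$. $w_{=2}(\xi)$ is the supremum of the real numbers $w$ such that, for arbitrarily large $H$, there is an irreducible polynomial $P \in \mathbb{Z}[X]$ of degree exactly $2$ with $H(P) \leq H$ and $0 < |P(\xi)| \leq H^{-w}$. $w_{=2}^{*}(\xi)$ is the supremum of the real numbers $w^{*}$ such that, for arbitrarily large $H$, there is a real algebraic number $\alpha$ of degree exactly $2$ with $H(\alpha) \leq H$ and $0 < |\xi - \alpha| \leq H(\alpha)^{-1} H^{-w^{*}}$. *)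

theory Defs
  imports "HOL-Computational_Algebra.Polynomial" "HOL-Library.Extended_Real"
          "HOL-Library.Countable_Set"
begin

definition height :: "int poly \<Rightarrow> int" where
  "height P = Max (insert 0 (abs ` set (coeffs P)))"

definition w1 :: "real \<Rightarrow> ereal" where
  "w1 \<xi> = Sup (ereal ` {w. \<forall>H0::real. \<exists>H\<ge>H0. \<exists>P::int poly.
      degree P \<le> 1 \<and> real_of_int (height P) \<le> H \<and>
      0 < \<bar>poly (map_poly real_of_int P) \<xi>\<bar> \<and> \<bar>poly (map_poly real_of_int P) \<xi>\<bar> \<le> H powr (-w)})"

definition liouville :: "real \<Rightarrow> bool" where
  "liouville \<xi> \<longleftrightarrow> w1 \<xi> = \<infinity>"

definition w_eq2 :: "real \<Rightarrow> ereal" where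
  "w_eq2 \<xi> = Sup (ereal ` {w. \<forall>H0::real. \<exists>H\<ge>H0. \<exists>P::int poly.
      irreducible P \<and> degree P = 2 \<and> real_of_int (height P) \<le> H \<and>
      0 < \<bar>poly (map_poly real_of_int P) \<xi>\<bar> \<and> \<bar>poly (map_poly real_of_int P) \<xi>\<bar> \<le> H powr (-w)})"

text \<open>Minimal polynomial over Z of a real number: irreducible in Z[X] (hence primitive),
  positive leading coefficient, vanishing at the number.\<close>
definition is_minpoly_Z :: "real \<Rightarrow> int poly \<Rightarrow> bool" where
  "is_minpoly_Z \<alpha> P \<longleftrightarrow> irreducible P \<and> lead_coeff P > 0 \<and> poly (map_poly real_of_int P) \<alpha> = 0"

definition w_eq2_star :: "real \<Rightarrow> ereal" where
  "w_eq2_star \<xi> = Sup (ereal ` {w. \<forall>H0::real. \<exists>H\<ge>H0. \<exists>(\<alpha>::real) (P::int poly).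
      is_minpoly_Z \<alpha> P \<and> degree P = 2 \<and> real_of_int (height P) \<le> H \<and>
      0 < \<bar>\<xi> - \<alpha>\<bar> \<and> \<bar>\<xi> - \<alpha>\<bar> \<le> inverse (real_of_int (height P)) * H powr (-w)})"

end

theory Submission
  imports Defs "HOL-Analysis.Analysis"
begin

lemma deg1_poly:
  fixes A :: "int poly"
  assumes "degree A = 1"
  shows "poly A r = coeff A 0 + coeff A 1 * r"
  using assms by (simp add: poly_altdef)

lemma irr_quad:
  fixes a d :: int
  assumes ns: "\<And>k. k^2 \<noteq> d"
  shows "irreducible [:a^2 - d, 2*a, 1:]"
proof (rule irreducibleI)
  let ?p = "[:a^2 - d, 2*a, 1:] :: int poly"
  show "?p \<noteq> 0" by simp
  show "\<not> ?p dvd 1" by (auto simp: is_unit_poly_iff)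
  fix A B assume pAB: "?p = A * B"
  have A0: "A \<noteq> 0" and B0: "B \<noteq> 0" using pAB by auto
  have "degree ?p = 2" by (simp add: degree_pCons_eq_if)
  then have dg: "degree A + degree B = 2" using pAB degree_mult_eq[OF A0 B0] by simp
  have "lead_coeff ?p = 1" using \<open>degree ?p = 2\<close> by simp
  then have lc: "lead_coeff A * lead_coeff B = 1" using pAB lead_coeff_mult[of A B] by simp
  have uA: "lead_coeff A = 1 \<or> lead_coeff A = -1" using lc zmult_eq_1_iff by blast
  have uB: "lead_coeff B = 1 \<or> lead_coeff B = -1" using lc zmult_eq_1_iff by (metis mult.commute)
  show "A dvd 1 \<or> B dvd 1"
  proof (cases "degree A = 0")
    case True
    then have "A = [:lead_coeff A:]" by (metis degree_eq_zeroE lead_coeff_pCons(1) pCons_0_0 coeff_pCons_0) 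
    moreover have "lead_coeff A dvd 1" using uA by auto
      ultimately show ?thesis using is_unit_poly_iff by blast
  next
    case F1: False
    show ?thesis
    proof (cases "degree B = 0")
      case True
      then have "B = [:lead_coeff B:]" by (metis degree_eq_zeroE lead_coeff_pCons(1) pCons_0_0 coeff_pCons_0)
      moreover have "lead_coeff B dvd 1" using uB by auto
      ultimately show ?thesis using is_unit_poly_iff by blast
    next
      case False
      with F1 dg have d1: "degree A = 1" by linarith
      let ?c0 = "coeff A 0" and ?c1 = "coeff A 1"
      have c1: "?c1 * ?c1 = 1" using uA d1 by auto
      define r where "r = - ?c0 * ?c1"
      have "poly A r = 0" using deg1_poly[OF d1, of r] c1 unfolding r_def
        by (simp add: algebra_simps)
      then have "poly ?p r = 0" using pAB by simp
      then have "(r + a)^2 = d" by (simp add: power2_eq_square algebra_simps)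
      with ns show ?thesis by blast
    qed
  qed
qed


lemma not_both_sq:
  fixes m :: int assumes "m \<ge> 1"
  shows "(\<forall>k. k^2 \<noteq> m) \<or> (\<forall>k. k^2 \<noteq> m + 1)"
proof (rule ccontr)
  assume "\<not> ?thesis"
  then obtain k l where k: "k^2 = m" and l: "l^2 = m + 1" by auto
  have k': "\<bar>k\<bar>^2 = m" and l': "\<bar>l\<bar>^2 = m+1" using k l by simp_all
  have "\<bar>k\<bar> \<noteq> 0" using k' assms by auto
  then have "\<bar>k\<bar> \<ge> 1" by linarith
  have "\<bar>k\<bar> < \<bar>l\<bar>" by (rule power_less_imp_less_base[of _ 2]) (use k' l' in auto)
  then have "\<bar>k\<bar> + 1 \<le> \<bar>l\<bar>" by simp
  then have "(\<bar>k\<bar> + 1)^2 \<le> \<bar>l\<bar>^2" by (rule power_mono) simp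
  then show False using k' l' \<open>\<bar>k\<bar> \<ge> 1\<close> by (simp add: power2_eq_square algebra_simps)
qed

lemma quad_dense:
  fixes x e :: real assumes e: "e > 0"
  shows "\<exists>a d::int. d \<ge> 1 \<and> (\<forall>k. k^2 \<noteq> d) \<and> \<bar>sqrt (of_int d) - of_int a - x\<bar> < e"
proof -
  define a where "a = \<lceil>max (1/e) 2 - x\<rceil>"
  define t where "t = x + of_int a"
  have t: "t \<ge> 1/e" "t \<ge> 2" unfolding t_def a_def by linarith+
  define m where "m = \<lfloor>t^2\<rfloor>"
  have "2*2 \<le> t*t" by (rule mult_mono) (use t in auto)
  then have "t^2 \<ge> 4" by (simp add: power2_eq_square)
  then have m1: "m \<ge> 1" unfolding m_def by linarith
  have mt: "of_int m \<le> t^2" "t^2 < of_int m + 1" unfolding m_def by linarith+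
  obtain d where d: "d = m \<or> d = m + 1" and ns: "\<forall>k. k^2 \<noteq> d"
    using not_both_sq[OF m1] by blast
  have d1: "d \<ge> 1" using d m1 by auto
  have dt: "\<bar>of_int d - t^2\<bar> \<le> 1" using d mt by auto
  have sd: "sqrt (of_int d) > 0" using d1 by simp
  have tp: "t > 0" using t by linarith
  have eq: "(sqrt (of_int d) - t) * (sqrt (of_int d) + t) = of_int d - t^2"
    using d1 by (simp add: algebra_simps power2_eq_square)
  have "\<bar>sqrt (of_int d) - t\<bar> * (sqrt (of_int d) + t) \<le> 1"
  proof -
    have "\<bar>sqrt (of_int d) - t\<bar> * (sqrt (of_int d) + t) = \<bar>(sqrt (of_int d) - t) * (sqrt (of_int d) + t)\<bar>"
      using sd tp by (simp add: abs_mult)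
    then show ?thesis using eq dt by simp
  qed
  then have "\<bar>sqrt (of_int d) - t\<bar> \<le> 1 / (sqrt (of_int d) + t)"
    using sd tp by (subst le_divide_eq) (auto simp del: real_sqrt_gt_0_iff)
  also have "\<dots> < 1 / t" by (rule divide_strict_left_mono) (use sd tp in \<open>auto intro!: mult_pos_pos simp del: real_sqrt_gt_0_iff\<close>)
  also have "\<dots> \<le> e" using t e tp by (simp add: field_simps)
  finally have "\<bar>sqrt (of_int d) - of_int a - x\<bar> < e" unfolding t_def by (simp add: algebra_simps)
  with d1 ns show ?thesis by blast
qed


lemma height_nonneg: "height P \<ge> 0"
  unfolding height_def by (rule Max_ge) auto

lemma height_lead: assumes "P \<noteq> 0" shows "\<bar>lead_coeff P\<bar> \<le> height P"
proof -
  have "lead_coeff P \<in> set (coeffs P)"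
    using assms last_coeffs_eq_coeff_degree[OF assms] by (metis coeffs_eq_Nil last_in_set)
  then show ?thesis unfolding height_def by (intro Max_ge) auto
qed

lemma sup_inf: assumes "\<And>w. w \<in> W" shows "Sup (ereal ` W) = \<infinity>"
proof -
  have "W = UNIV" using assms by auto
  have "\<exists>i\<in>range ereal. x < i" if "x < \<infinity>" for x
  proof -
    obtain n where "x < ereal (real n)" using \<open>x < \<infinity>\<close> less_PInf_Ex_of_nat by blast
    then show ?thesis by blast
  qed
  then have "Sup (range ereal) = \<infinity>"
    by (subst Sup_eq_top_iff[where 'a=ereal, unfolded top_ereal_def]) auto
  then show ?thesis using \<open>W = UNIV\<close> by simp
qed

lemma map_quad: "map_poly real_of_int [:c0, c1, 1:] = [:real_of_int c0, real_of_int c1, 1:]"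
  by (simp add: map_poly_pCons)

lemma open_ex:
  fixes g :: "'i \<Rightarrow> real \<Rightarrow> real"
  assumes "\<And>i. continuous_on UNIV (g i)"
  shows "open {x::real. \<exists>i\<in>I. 0 < g i x \<and> g i x < c i}"
proof -
  have "{x::real. \<exists>i\<in>I. 0 < g i x \<and> g i x < c i} = (\<Union>i\<in>I. {x. 0 < g i x} \<inter> {x. g i x < c i})" by auto
  also have "open \<dots>"
    by (intro open_UN ballI open_Int open_Collect_less[OF continuous_on_const assms] open_Collect_less[OF assms continuous_on_const])
  finally show ?thesis .
qed


definition U1 :: "nat \<Rightarrow> real set" where
  "U1 n = {\<xi>. \<exists>(H,P)\<in>{(H::real,P::int poly). H \<ge> real n \<and> degree P \<le> 1 \<and> real_of_int (height P) \<le> H}.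
     0 < \<bar>poly (map_poly real_of_int P) \<xi>\<bar> \<and> \<bar>poly (map_poly real_of_int P) \<xi>\<bar> < H powr (- real n)}"

definition U2 :: "nat \<Rightarrow> real set" where
  "U2 n = {\<xi>. \<exists>(H,P)\<in>{(H::real,P::int poly). H \<ge> real n \<and> irreducible P \<and> degree P = 2 \<and> real_of_int (height P) \<le> H}.
     0 < \<bar>poly (map_poly real_of_int P) \<xi>\<bar> \<and> \<bar>poly (map_poly real_of_int P) \<xi>\<bar> < H powr (- real n)}"

definition U3 :: "nat \<Rightarrow> real set" where
  "U3 n = {\<xi>. \<exists>(H,\<alpha>,P)\<in>{(H::real,\<alpha>::real,P::int poly). H \<ge> real n \<and> is_minpoly_Z \<alpha> P \<and> degree P = 2 \<and> real_of_int (height P) \<le> H}.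
     0 < \<bar>\<xi> - \<alpha>\<bar> \<and> \<bar>\<xi> - \<alpha>\<bar> < inverse (real_of_int (height P)) * H powr (- real n)}"

lemma open_U1: "open (U1 n)"
proof -
  have "U1 n = {\<xi>. \<exists>i\<in>{(H::real,P::int poly). H \<ge> real n \<and> degree P \<le> 1 \<and> real_of_int (height P) \<le> H}.
     0 < (\<lambda>(H,P) \<xi>. \<bar>poly (map_poly real_of_int P) \<xi>\<bar>) i \<xi> \<and> (\<lambda>(H,P) \<xi>. \<bar>poly (map_poly real_of_int P) \<xi>\<bar>) i \<xi> < (\<lambda>(H,P). H powr (- real n)) i}"
    unfolding U1_def by auto
  also have "open \<dots>" by (rule open_ex) (auto split: prod.split intro!: continuous_intros)
  finally show ?thesis .
qed

lemma open_U2: "open (U2 n)"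
proof -
  have "U2 n = {\<xi>. \<exists>i\<in>{(H::real,P::int poly). H \<ge> real n \<and> irreducible P \<and> degree P = 2 \<and> real_of_int (height P) \<le> H}.
     0 < (\<lambda>(H,P) \<xi>. \<bar>poly (map_poly real_of_int P) \<xi>\<bar>) i \<xi> \<and> (\<lambda>(H,P) \<xi>. \<bar>poly (map_poly real_of_int P) \<xi>\<bar>) i \<xi> < (\<lambda>(H,P). H powr (- real n)) i}"
    unfolding U2_def by auto
  also have "open \<dots>" by (rule open_ex) (auto split: prod.split intro!: continuous_intros)
  finally show ?thesis .
qed

lemma open_U3: "open (U3 n)"
proof -
  have "U3 n = {\<xi>. \<exists>i\<in>{(H::real,\<alpha>::real,P::int poly). H \<ge> real n \<and> is_minpoly_Z \<alpha> P \<and> degree P = 2 \<and> real_of_int (height P) \<le> H}.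
     0 < (\<lambda>(H,\<alpha>,P) \<xi>. \<bar>\<xi> - \<alpha>\<bar>) i \<xi> \<and> (\<lambda>(H,\<alpha>,P) \<xi>. \<bar>\<xi> - \<alpha>\<bar>) i \<xi> < (\<lambda>(H,\<alpha>,P). inverse (real_of_int (height P)) * H powr (- real n)) i}"
    unfolding U3_def by auto
  also have "open \<dots>" by (rule open_ex) (auto split: prod.split intro!: continuous_intros)
  finally show ?thesis .
qed


lemma dense_U1: "x \<in> closure (U1 n)"
  unfolding closure_approachable
proof (intro allI impI)
  fix e :: real assume e: "e > 0"
  obtain r where r: "r \<in> \<rat>" "x < r" "r < x + e/2" using Rats_dense_in_real[of x "x + e/2"] e by auto
  obtain p q :: int where q: "q > 0" and rpq: "r = of_int p / of_int q" using r(1) by (metis Rats_cases')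
  define P where "P = [:-p, q:]"
  define H where "H = max (real n) (max (real_of_int (height P)) 1)"
  have H1: "H \<ge> 1" unfolding H_def by auto
  have Hp: "H powr (- real n) > 0" using H1 by simp
  define \<delta> where "\<delta> = min (e/2) (H powr (- real n) / (2 * of_int q))"
  have dp: "\<delta> > 0" unfolding \<delta>_def using e Hp q by auto
  have qd: "of_int q * \<delta> < H powr (- real n)"
  proof -
    have "of_int q * \<delta> \<le> of_int q * (H powr (- real n) / (2 * of_int q))"
      unfolding \<delta>_def using q by (intro mult_left_mono) auto
    also have "\<dots> = H powr (- real n) / 2" using q by simp
    finally show ?thesis using Hp by linarith
  qed
  have pv: "poly (map_poly real_of_int P) (r + \<delta>) = of_int q * \<delta>"
    unfolding P_def rpq using q by (simp add: map_poly_pCons field_simps)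
  have "r + \<delta> \<in> U1 n"
    unfolding U1_def
    apply (rule CollectI, rule bexI[of _ "(H, P)"])
    using pv qd dp q H1 unfolding P_def H_def by (auto simp: degree_pCons_eq_if)
  moreover have "dist (r + \<delta>) x < e" using r dp unfolding \<delta>_def dist_real_def by auto
  ultimately show "\<exists>y\<in>U1 n. dist y x < e" by blast
qed


lemma quad_facts:
  fixes a d :: int assumes d1: "d \<ge> 1" and ns: "\<forall>k. k^2 \<noteq> d"
  defines "P \<equiv> [:a^2 - d, 2*a, 1:]"
  shows "irreducible P" "degree P = 2" "lead_coeff P = 1" "height P \<ge> 1"
    "\<And>y. poly (map_poly real_of_int P) y = (y + of_int a)^2 - of_int d"
proof -
  show "irreducible P" unfolding P_def using irr_quad ns by blast
  show dg: "degree P = 2" unfolding P_def by (simp add: degree_pCons_eq_if)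
  show lc: "lead_coeff P = 1" using dg unfolding P_def by simp
  have "P \<noteq> 0" using dg by auto
  then show "height P \<ge> 1" using height_lead[of P] lc by simp
  fix y show "poly (map_poly real_of_int P) y = (y + of_int a)^2 - of_int d"
    unfolding P_def by (simp add: map_poly_pCons power2_eq_square algebra_simps)
qed

lemma dense_U23: "x \<in> closure (U2 n \<inter> U3 n)"
  unfolding closure_approachable
proof (intro allI impI)
  fix e :: real assume e: "e > 0"
  obtain a d :: int where d1: "d \<ge> 1" and ns: "\<forall>k. k^2 \<noteq> d"
    and ad: "\<bar>sqrt (of_int d) - of_int a - x\<bar> < e/2"
    using quad_dense[of "e/2" x] e by auto
  define P where "P = [:a^2 - d, 2*a, 1:]"
  note qf = quad_facts[OF d1 ns, of a, folded P_def]
  define \<alpha> where "\<alpha> = sqrt (of_int d) - of_int a"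
  define s where "s = sqrt (of_int d)"
  have d0: "d \<ge> 0" using d1 by simp
  have s0: "s \<ge> 0" unfolding s_def using d0 by simp
  have ss: "s^2 = of_int d" unfolding s_def using d0 by simp
  define H where "H = max (real n) (max (real_of_int (height P)) 1)"
  have H1: "H \<ge> 1" unfolding H_def by auto
  have Hp: "H powr (- real n) > 0" using H1 by simp
  have hp: "real_of_int (height P) \<ge> 1" using qf(4) by simp
  define c where "c = H powr (- real n) / (2 * (2 * s + 1))"
  define c' where "c' = inverse (real_of_int (height P)) * H powr (- real n) / 2"
  have cp: "c > 0" unfolding c_def using Hp s0 by auto
  have cp': "c' > 0" unfolding c'_def using Hp hp by auto
  define \<delta> where "\<delta> = min (min (e/2) 1) (min c c')"
  have dp: "\<delta> > 0" unfolding \<delta>_def using e cp cp' by auto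
  have d_le: "\<delta> \<le> 1" "\<delta> \<le> c" "\<delta> \<le> c'" "\<delta> \<le> e/2" unfolding \<delta>_def by auto
  have pv: "poly (map_poly real_of_int P) (\<alpha> + \<delta>) = \<delta> * (2 * s + \<delta>)"
    unfolding qf(5) \<alpha>_def using ss unfolding s_def by (simp add: power2_eq_square algebra_simps)
  have pos: "\<delta> * (2 * s + \<delta>) > 0" using dp s0 by simp
  have "\<delta> * (2 * s + \<delta>) \<le> c * (2 * s + 1)"
    using d_le dp s0 by (intro mult_mono) auto
  also have "\<dots> = H powr (- real n) / 2" unfolding c_def using s0 by (simp add: field_simps)
  finally have small: "\<delta> * (2 * s + \<delta>) < H powr (- real n)" using Hp by linarith
  have small': "\<delta> < inverse (real_of_int (height P)) * H powr (- real n)"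
    using d_le(3) cp' unfolding c'_def by linarith
  have mp: "is_minpoly_Z \<alpha> P"
    unfolding is_minpoly_Z_def using qf ss unfolding \<alpha>_def s_def by simp
  have "\<alpha> + \<delta> \<in> U2 n"
    unfolding U2_def
    apply (rule CollectI, rule bexI[of _ "(H, P)"])
    using pv pos small qf H1 unfolding H_def by auto
  moreover have "\<alpha> + \<delta> \<in> U3 n"
    unfolding U3_def
    apply (rule CollectI, rule bexI[of _ "(H, \<alpha>, P)"])
    using mp dp small' qf H1 unfolding H_def by auto
  moreover have "dist (\<alpha> + \<delta>) x < e" using ad[unfolded abs_less_iff] dp d_le(4) unfolding \<alpha>_def dist_real_def abs_less_iff by linarith
  ultimately show "\<exists>y\<in>U2 n \<inter> U3 n. dist y x < e" by blast
qed


lemma pick_n: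
  fixes w H0 :: real
  obtains n :: nat where "real n \<ge> w" "real n \<ge> H0" "real n \<ge> 1"
proof
  let ?n = "nat \<lceil>max (max w H0) 1\<rceil>"
  show "real ?n \<ge> w" "real ?n \<ge> H0" "real ?n \<ge> 1" by linarith+
qed

lemma powr_le_w: assumes "H \<ge> 1" "real n \<ge> w" shows "H powr (- real n) \<le> H powr (- w)"
  using assms by (intro powr_mono) auto

lemma liou: assumes "\<And>n. \<xi> \<in> U1 n" shows "liouville \<xi>"
  unfolding liouville_def w1_def
proof (rule sup_inf, rule CollectI, intro allI)
  fix w H0 :: real
  obtain n where n: "real n \<ge> w" "real n \<ge> H0" "real n \<ge> 1" by (rule pick_n)
  from assms[of n] obtain H P where HP: "H \<ge> real n" "degree P \<le> 1" "real_of_int (height P) \<le> H"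
    "0 < \<bar>poly (map_poly real_of_int P) \<xi>\<bar>" "\<bar>poly (map_poly real_of_int P) \<xi>\<bar> < H powr (- real n)"
    unfolding U1_def by auto
  have "H powr (- real n) \<le> H powr (- w)" using HP(1) n by (intro powr_le_w) auto
  then show "\<exists>H\<ge>H0. \<exists>P::int poly. degree P \<le> 1 \<and> real_of_int (height P) \<le> H \<and>
      0 < \<bar>poly (map_poly real_of_int P) \<xi>\<bar> \<and> \<bar>poly (map_poly real_of_int P) \<xi>\<bar> \<le> H powr (-w)"
    using HP n by (intro exI[of _ H] conjI exI[of _ P]) auto
qed

lemma weq2: assumes "\<And>n. \<xi> \<in> U2 n" shows "w_eq2 \<xi> = \<infinity>"
  unfolding w_eq2_def
proof (rule sup_inf, rule CollectI, intro allI)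
  fix w H0 :: real
  obtain n where n: "real n \<ge> w" "real n \<ge> H0" "real n \<ge> 1" by (rule pick_n)
  from assms[of n] obtain H P where HP: "H \<ge> real n" "irreducible P" "degree P = 2" "real_of_int (height P) \<le> H"
    "0 < \<bar>poly (map_poly real_of_int P) \<xi>\<bar>" "\<bar>poly (map_poly real_of_int P) \<xi>\<bar> < H powr (- real n)"
    unfolding U2_def by auto
  have "H powr (- real n) \<le> H powr (- w)" using HP(1) n by (intro powr_le_w) auto
  then show "\<exists>H\<ge>H0. \<exists>P::int poly. irreducible P \<and> degree P = 2 \<and> real_of_int (height P) \<le> H \<and>
      0 < \<bar>poly (map_poly real_of_int P) \<xi>\<bar> \<and> \<bar>poly (map_poly real_of_int P) \<xi>\<bar> \<le> H powr (-w)"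
    using HP n by (intro exI[of _ H] conjI exI[of _ P]) auto
qed

lemma weq2s: assumes "\<And>n. \<xi> \<in> U3 n" shows "w_eq2_star \<xi> = \<infinity>"
  unfolding w_eq2_star_def
proof (rule sup_inf, rule CollectI, intro allI)
  fix w H0 :: real
  obtain n where n: "real n \<ge> w" "real n \<ge> H0" "real n \<ge> 1" by (rule pick_n)
  from assms[of n] obtain H \<alpha> P where HP: "H \<ge> real n" "is_minpoly_Z \<alpha> P" "degree P = 2" "real_of_int (height P) \<le> H"
    "0 < \<bar>\<xi> - \<alpha>\<bar>" "\<bar>\<xi> - \<alpha>\<bar> < inverse (real_of_int (height P)) * H powr (- real n)"
    unfolding U3_def by auto
  have "H powr (- real n) \<le> H powr (- w)" using HP(1) n by (intro powr_le_w) auto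
  then have "inverse (real_of_int (height P)) * H powr (- real n) \<le> inverse (real_of_int (height P)) * H powr (- w)"
    using height_nonneg[of P] by (intro mult_left_mono) auto
  then show "\<exists>H\<ge>H0. \<exists>(\<alpha>::real) (P::int poly).
      is_minpoly_Z \<alpha> P \<and> degree P = 2 \<and> real_of_int (height P) \<le> H \<and>
      0 < \<bar>\<xi> - \<alpha>\<bar> \<and> \<bar>\<xi> - \<alpha>\<bar> \<le> inverse (real_of_int (height P)) * H powr (-w)"
    using HP n by (intro exI[of _ H] conjI exI[of _ \<alpha>] exI[of _ P]) auto
qed

lemma dense_compl: "x \<in> closure (- {s::real})"
  unfolding closure_approachable
proof (intro allI impI)
  fix e :: real assume e: "e > 0"
  show "\<exists>y\<in>- {s}. dist y x < e"
  proof (cases "x = s")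
    case True
    then show ?thesis using e by (intro bexI[of _ "x + e/2"]) (auto simp: dist_real_def)
  next
    case False
    then show ?thesis using e by (intro bexI[of _ x]) auto
  qed
qed

theorem corollary1p4:
  shows "uncountable {\<xi>::real. liouville \<xi> \<and> w_eq2 \<xi> = \<infinity> \<and> w_eq2_star \<xi> = \<infinity>}"
proof
  define S where "S = {\<xi>::real. liouville \<xi> \<and> w_eq2 \<xi> = \<infinity> \<and> w_eq2_star \<xi> = \<infinity>}"
  assume cS: "countable {\<xi>::real. liouville \<xi> \<and> w_eq2 \<xi> = \<infinity> \<and> w_eq2_star \<xi> = \<infinity>}"
  then have cS: "countable S" unfolding S_def .
  define G where "G = range U1 \<union> range (\<lambda>n. U2 n \<inter> U3 n) \<union> (\<lambda>s. - {s}) ` S"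
  have "countable G" unfolding G_def using cS by auto
  moreover have "openin (top_of_set UNIV) T \<and> UNIV \<subseteq> closure T" if "T \<in> G" for T
    using that unfolding G_def
    by (auto intro: open_U1 open_U2 open_U3 dense_U1 dense_U23 dense_compl)
  ultimately have "(UNIV::real set) \<subseteq> closure (\<Inter>G)"
    by (intro Baire) auto
  then have "\<Inter>G \<noteq> {}" by auto
  then obtain \<xi> where xi: "\<xi> \<in> \<Inter>G" by blast
  then have "\<xi> \<in> U1 n" "\<xi> \<in> U2 n" "\<xi> \<in> U3 n" for n unfolding G_def by auto
  then have "\<xi> \<in> S" unfolding S_def using liou weq2 weq2s by blast
  moreover have "\<xi> \<notin> S" using xi unfolding G_def by auto
  ultimately show False by blast
qed

end
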